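(* Let $G$ be a group. Jensen's equation $f(xy)+f(xy^{-1})=2f(x)$ is stable over $G$ (i.e. stable for the pair $(G;E)$ for every real Banach space $E$, equivalently for some real Banach space $E$) if and only if $PJ(G)=J_0(G)$.
   Context: For a real Banach space $E$, the equation is stable for the pair $(G;E)$ if for every $f\colon G\to E$ such that for some $c>0$, $\|f(xy)+f(xy^{-1})-2f(x)\|\le c$ for all $x,y\in G$, there exists $j\colon G\to E$ with $j(xy)+j(xy^{-1})=2j(x)$ for all $x,y$ and $j-f$ bounded. $PJ(G)$ is the space of functions $f\colon G\to\mathbb{R}$ such that for some $c>0$, $|f(xy)+f(xy^{-1})-2f(x)|\le c$ for all $x,y$, and $f(x^n)=nf(x)$ for all $x\in G$, $n\in\mathbb{Z}$. $J_0(G)$ is the space of $f\colon G\to\mathbb{R}$ with $f(xy)+f(xy^{-1})=2f(x)$ for all $x,y$ and $f(1)=0$. *)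

theory Defs
  imports Complex_Main
begin

text \<open>Groups are written additively via the (not necessarily commutative)
  type class group_add: x y corresponds to x + y and x y^{-1} to x - y.\<close>

definition gpow :: "'g::group_add \<Rightarrow> int \<Rightarrow> 'g" where
  "gpow x n = (if 0 \<le> n then (((+) x) ^^ nat n) 0
               else - ((((+) x) ^^ nat (- n)) 0))"

definition jensen_stable :: "'g::group_add itself \<Rightarrow> 'e::banach itself \<Rightarrow> bool" where
  "jensen_stable _ _ \<longleftrightarrow>
     (\<forall>f :: 'g \<Rightarrow> 'e.
        (\<exists>c>0. \<forall>x y. norm (f (x + y) + f (x - y) - 2 *\<^sub>R f x) \<le> c) \<longrightarrow>
        (\<exists>j :: 'g \<Rightarrow> 'e. (\<forall>x y. j (x + y) + j (x - y) = 2 *\<^sub>R j x) \<and>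
                        (\<exists>B. \<forall>x. norm (j x - f x) \<le> B)))"

definition PJ :: "('g::group_add \<Rightarrow> real) set" where
  "PJ = {f. (\<exists>c>0. \<forall>x y. \<bar>f (x + y) + f (x - y) - 2 * f x\<bar> \<le> c) \<and>
            (\<forall>x n. f (gpow x n) = of_int n * f x)}"

definition J0 :: "('g::group_add \<Rightarrow> real) set" where
  "J0 = {f. (\<forall>x y. f (x + y) + f (x - y) = 2 * f x) \<and> f 0 = 0}"

end

theory Submission
  imports Defs
begin


lemma pw_comm: "x + (((+) x) ^^ k) 0 = (((+) x) ^^ k) 0 + (x::'g::group_add)"
  by (induction k) (simp_all add: add.assoc[symmetric])

lemma gpow_0[simp]: "gpow x 0 = 0"
  by (simp add: gpow_def)

lemma gpow_succ: "gpow (x::'g::group_add) (n + 1) = gpow x n + x"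
proof (cases "n \<ge> 0")
  case True
  then have "nat (n + 1) = Suc (nat n)" by simp
  then show ?thesis using True by (simp add: gpow_def pw_comm)
next
  case False
  then obtain k where k: "n = - int (Suc k)" using negD[of n] by auto
  show ?thesis
  proof (cases "k = 0")
    case True then show ?thesis using k by (simp add: gpow_def)
  next
    case False
    then have "n + 1 = - int k" "\<not> 0 \<le> - int k" using k by auto
    moreover have "nat (int k + 1) = Suc k" by simp
    ultimately show ?thesis using k by (simp add: gpow_def minus_add add.assoc)
  qed
qed

lemma gpow_1[simp]: "gpow (x::'g::group_add) 1 = x"
  using gpow_succ[of x 0] by simp

lemma gpow_pred: "gpow (x::'g::group_add) (n - 1) = gpow x n - x"
  using gpow_succ[of x "n - 1"] by (simp add: eq_diff_eq)

lemma gpow_add: "gpow (x::'g::group_add) m + gpow x n = gpow x (m + n)"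
proof (induction n rule: int_induct[where k = 0])
  case base then show ?case by simp
next
  case (step1 i)
  have "gpow x m + gpow x (i + 1) = (gpow x m + gpow x i) + x"
    by (simp only: gpow_succ add.assoc)
  also have "\<dots> = gpow x (m + i + 1)" by (simp only: step1 gpow_succ)
  finally show ?case by (simp only: add.assoc)
next
  case (step2 i)
  have p: "gpow x (i - 1) = gpow x i + - x" by (subst gpow_pred) (rule diff_conv_add_uminus)
  have "gpow x m + gpow x (i - 1) = (gpow x m + gpow x i) - x"
    unfolding p by (metis add.assoc diff_conv_add_uminus)
  also have "\<dots> = gpow x (m + i - 1)" by (simp only: step2 gpow_pred)
  finally show ?case by (simp only: add_diff_eq)
qed

lemma gpow_neg: "gpow (x::'g::group_add) (- n) = - gpow x n"
proof -
  have "gpow x n + gpow x (- n) = 0" using gpow_add[of x n "-n"] by simp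
  then show ?thesis by (rule minus_unique[symmetric])
qed

lemma gpow_diff: "gpow (x::'g::group_add) m - gpow x n = gpow x (m - n)"
proof -
  have "gpow x m - gpow x n = gpow x m + gpow x (- n)" by (simp only: gpow_neg diff_conv_add_uminus)
  also have "\<dots> = gpow x (m - n)" by (simp only: gpow_add) simp
  finally show ?thesis .
qed

lemma gpow_mult: "gpow (gpow (x::'g::group_add) n) m = gpow x (n * m)"
proof (induction m rule: int_induct[where k = 0])
  case base then show ?case by simp
next
  case (step1 i)
  have "gpow (gpow x n) (i + 1) = gpow x (n * i) + gpow x n" by (simp only: gpow_succ step1)
  also have "\<dots> = gpow x (n * (i + 1))" by (simp only: gpow_add) (simp add: distrib_left)
  finally show ?case .
next
  case (step2 i)
  have "gpow (gpow x n) (i - 1) = gpow x (n * i) - gpow x n" by (simp only: gpow_pred step2)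
  also have "\<dots> = gpow x (n * (i - 1))" by (simp only: gpow_diff) (simp add: right_diff_distrib)
  finally show ?case .
qed

lemma jensen_add_int:
  fixes h :: "int \<Rightarrow> 'e::real_normed_vector"
  assumes "\<And>m n. norm (h (m + n) + h (m - n) - 2 *\<^sub>R h m) \<le> c" and "h 0 = 0"
  shows "norm (h (m + n) - h m - h n) \<le> 3 / 2 * c"
proof -
  have tri: "norm (a + b - d) \<le> norm a + norm b + norm d" for a b d :: 'e
    using norm_triangle_ineq4[of "a + b" d] norm_triangle_ineq[of a b] by linarith
  have eq: "2 *\<^sub>R (h (m + n) - h m - h n) =
        (h (m + n) + h (m - n) - 2 *\<^sub>R h m) + (h (n + m) + h (n - m) - 2 *\<^sub>R h n)
        - (h (0 + (m - n)) + h (0 - (m - n)) - 2 *\<^sub>R h 0)"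
    using assms(2) by (simp add: algebra_simps scaleR_2)
  have "2 * norm (h (m + n) - h m - h n) = norm (2 *\<^sub>R (h (m + n) - h m - h n))" by simp
  also have "\<dots> \<le> norm (h (m + n) + h (m - n) - 2 *\<^sub>R h m)
      + norm (h (n + m) + h (n - m) - 2 *\<^sub>R h n) + norm (h (0 + (m - n)) + h (0 - (m - n)) - 2 *\<^sub>R h 0)"
    unfolding eq by (rule tri)
  also have "\<dots> \<le> 3 * c" using assms(1)[of m n] assms(1)[of n m] assms(1)[of 0 "m - n"] by linarith
  finally show ?thesis by simp
qed

lemma int_additive:
  fixes A :: "int \<Rightarrow> 'e::real_vector"
  assumes "\<And>m n. A (m + n) = A m + A n"
  shows "A n = of_int n *\<^sub>R A 1"
proof -
  have A0: "A 0 = 0" using assms[of 0 0] by simp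
  show ?thesis
  proof (induction n rule: int_induct[where k = 0])
    case base then show ?case using A0 by simp
  next
    case (step1 i) then show ?case using assms[of i 1] by (simp add: algebra_simps)
  next
    case (step2 i)
    have "A i = A (i - 1) + A 1" using assms[of "i - 1" 1] by simp
    then show ?case using step2 by (simp add: algebra_simps)
  qed
qed

lemma jensen_gpow:
  fixes j :: "'g::group_add \<Rightarrow> 'e::real_normed_vector"
  assumes J: "\<And>x y. j (x + y) + j (x - y) = 2 *\<^sub>R j x" and j0: "j 0 = 0"
  shows "j (gpow x n) = of_int n *\<^sub>R j x"
proof -
  define h where "h = (\<lambda>n. j (gpow x n))"
  have "h (m + n) + h (m - n) - 2 *\<^sub>R h m = 0" for m n
  proof -
    have "h (m + n) + h (m - n) = 2 *\<^sub>R h m"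
      unfolding h_def gpow_add[of x m n, symmetric] gpow_diff[of x m n, symmetric] by (rule J)
    then show ?thesis by (simp only: right_minus_eq)
  qed
  then have "norm (h (m + n) + h (m - n) - 2 *\<^sub>R h m) \<le> 0" for m n by (simp only: norm_zero order_refl)
  then have "norm (h (m + n) - h m - h n) \<le> 3 / 2 * 0" for m n
    by (rule jensen_add_int) (simp only: h_def j0 gpow_0)
  then have "h (m + n) - h m - h n = 0" for m n by (simp only: mult_zero_right norm_le_zero_iff)
  then have "h (m + n) = h m + h n" for m n by (simp only: diff_diff_eq right_minus_eq)
  then have "h n = of_int n *\<^sub>R h 1" by (rule int_additive)
  then show ?thesis by (simp add: h_def)
qed



definition sublin :: "('e::real_normed_vector \<Rightarrow> real) \<Rightarrow> bool" where
  "sublin q \<longleftrightarrow> (\<forall>x y. q (x + y) \<le> q x + q y) \<and> (\<forall>t x. t \<ge> 0 \<longrightarrow> q (t *\<^sub>R x) = t * q x)"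

definition Tq :: "('e::real_normed_vector \<Rightarrow> real) \<Rightarrow> 'e \<Rightarrow> 'e \<Rightarrow> real" where
  "Tq q a x = Inf ((\<lambda>t. q (x + t *\<^sub>R a) - t * q a) ` {0..})"

lemma sublin_add: "sublin q \<Longrightarrow> q (x + y) \<le> q x + q y"
  by (simp add: sublin_def)
lemma sublin_hom: "sublin q \<Longrightarrow> t \<ge> 0 \<Longrightarrow> q (t *\<^sub>R x) = t * q x"
  by (simp add: sublin_def)
lemma sublin_zero: "sublin q \<Longrightarrow> q 0 = 0"
  using sublin_hom[of q 0 0] by simp
lemma sublin_lower: "sublin q \<Longrightarrow> - q (- x) \<le> q x"
  using sublin_add[of q x "-x"] sublin_zero[of q] by simp

lemma Tq_bdd: assumes "sublin q" shows "bdd_below ((\<lambda>t. q (x + t *\<^sub>R a) - t * q a) ` {0..})"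
proof (rule bdd_belowI2)
  fix t :: real assume "t \<in> {0..}"
  then have t: "t \<ge> 0" by simp
  have "q (t *\<^sub>R a) \<le> q (x + t *\<^sub>R a) + q (-x)"
    using sublin_add[OF assms, of "x + t *\<^sub>R a" "-x"] by simp
  then show "- q (-x) \<le> q (x + t *\<^sub>R a) - t * q a" using sublin_hom[OF assms t] by simp
qed

lemma Tq_le: "sublin q \<Longrightarrow> t \<ge> 0 \<Longrightarrow> Tq q a x \<le> q (x + t *\<^sub>R a) - t * q a"
  unfolding Tq_def by (rule cInf_lower) (auto intro: Tq_bdd)

lemma Tq_ge: "sublin q \<Longrightarrow> (\<And>t. t \<ge> 0 \<Longrightarrow> m \<le> q (x + t *\<^sub>R a) - t * q a) \<Longrightarrow> m \<le> Tq q a x"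
  unfolding Tq_def by (rule cInf_greatest) auto

lemma Tq_below: "sublin q \<Longrightarrow> Tq q a x \<le> q x"
  using Tq_le[of q 0 a x] by simp

lemma Tq_sublin: assumes q: "sublin q" shows "sublin (Tq q a)"
  unfolding sublin_def
proof (intro conjI allI impI)
  fix x y
  have "Tq q a (x + y) - (q (y + t *\<^sub>R a) - t * q a) \<le> Tq q a x" if t: "t \<ge> 0" for t
  proof (rule Tq_ge[OF q])
    fix s :: real assume s: "s \<ge> 0"
    have "Tq q a (x + y) \<le> q (x + y + (s + t) *\<^sub>R a) - (s + t) * q a"
      using Tq_le[OF q, of "s + t"] s t by simp
    also have "q (x + y + (s + t) *\<^sub>R a) \<le> q (x + s *\<^sub>R a) + q (y + t *\<^sub>R a)"
      using sublin_add[OF q, of "x + s *\<^sub>R a" "y + t *\<^sub>R a"]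
      by (simp add: algebra_simps scaleR_add_left)
    finally show "Tq q a (x + y) - (q (y + t *\<^sub>R a) - t * q a) \<le> q (x + s *\<^sub>R a) - s * q a"
      by (simp add: algebra_simps)
  qed
  then have "Tq q a (x + y) - Tq q a x \<le> Tq q a y"
    by (intro Tq_ge[OF q]) (auto simp: algebra_simps)
  then show "Tq q a (x + y) \<le> Tq q a x + Tq q a y" by simp
next
  fix r :: real and x assume r: "r \<ge> 0"
  show "Tq q a (r *\<^sub>R x) = r * Tq q a x"
  proof (cases "r = 0")
    case True
    have "Tq q a 0 = 0"
    proof (rule antisym)
      show "Tq q a 0 \<le> 0" using Tq_below[OF q, of a 0] sublin_zero[OF q] by simp
      show "0 \<le> Tq q a 0" by (rule Tq_ge[OF q]) (simp add: sublin_hom[OF q])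
    qed
    then show ?thesis using True by simp
  next
    case False
    then have rp: "r > 0" using r by simp
    have "Tq q a (r *\<^sub>R x) / r \<le> Tq q a x"
    proof (rule Tq_ge[OF q])
      fix s :: real assume s: "s \<ge> 0"
      have "Tq q a (r *\<^sub>R x) \<le> q (r *\<^sub>R x + (r * s) *\<^sub>R a) - (r * s) * q a"
        using Tq_le[OF q, of "r * s"] s r by simp
      also have "q (r *\<^sub>R x + (r * s) *\<^sub>R a) = r * q (x + s *\<^sub>R a)"
        using sublin_hom[OF q r, of "x + s *\<^sub>R a"] by (simp add: scaleR_add_right)
      finally show "Tq q a (r *\<^sub>R x) / r \<le> q (x + s *\<^sub>R a) - s * q a"
        using rp by (simp add: field_simps)
    qed
    moreover have "r * Tq q a x \<le> Tq q a (r *\<^sub>R x)"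
    proof (rule Tq_ge[OF q])
      fix t :: real assume t: "t \<ge> 0"
      have "Tq q a x \<le> q (x + (t / r) *\<^sub>R a) - (t / r) * q a"
        using Tq_le[OF q, of "t / r"] t rp by simp
      also have "r * q (x + (t / r) *\<^sub>R a) = q (r *\<^sub>R x + t *\<^sub>R a)"
        using sublin_hom[OF q r, of "x + (t / r) *\<^sub>R a"] rp by (simp add: scaleR_add_right)
      ultimately show "r * Tq q a x \<le> q (r *\<^sub>R x + t *\<^sub>R a) - t * q a"
        using rp by (simp add: field_simps)
    qed
    ultimately show ?thesis using rp by (simp add: field_simps)
  qed
qed

lemma sublin_norm: "sublin (norm :: 'e::real_normed_vector \<Rightarrow> real)"
  unfolding sublin_def by (auto intro: norm_triangle_ineq)

lemma chain_inf_sublin: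
  fixes C :: "('e::real_normed_vector \<Rightarrow> real) set"
  assumes C: "C \<noteq> {}" "\<And>q. q \<in> C \<Longrightarrow> sublin q \<and> (\<forall>x. q x \<le> norm x)"
    and ch: "\<And>p q. p \<in> C \<Longrightarrow> q \<in> C \<Longrightarrow> (\<forall>x. q x \<le> p x) \<or> (\<forall>x. p x \<le> q x)"
  defines "u \<equiv> \<lambda>x. Inf ((\<lambda>q. q x) ` C)"
  shows "sublin u" and "\<And>q x. q \<in> C \<Longrightarrow> u x \<le> q x"
proof -
  have bdd: "bdd_below ((\<lambda>q. q x) ` C)" for x
  proof (rule bdd_belowI2)
    fix q assume "q \<in> C"
    then have "- q (-x) \<le> q x" "q (-x) \<le> norm (-x)" using C(2)[of q] sublin_lower by blast+
    then show "- norm x \<le> q x" by simp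
  qed
  show low: "u x \<le> q x" if "q \<in> C" for q x
    unfolding u_def using bdd that by (intro cInf_lower) auto
  have ge: "m \<le> u x" if "\<And>q. q \<in> C \<Longrightarrow> m \<le> q x" for m x
    unfolding u_def using C(1) that by (intro cInf_greatest) auto
  show "sublin u"
    unfolding sublin_def
  proof (intro conjI allI impI)
    fix x y
    have "u (x + y) - q2 y \<le> q1 x" if "q1 \<in> C" "q2 \<in> C" for q1 q2
    proof -
      from ch[OF that] consider "\<forall>x. q2 x \<le> q1 x" | "\<forall>x. q1 x \<le> q2 x" by blast
      then show ?thesis
      proof cases
        case 1
        have "u (x + y) \<le> q2 (x + y)" using low that by auto
        also have "\<dots> \<le> q2 x + q2 y" using C(2) that sublin_add by blast
        finally show ?thesis using 1[rule_format, of x] by linarith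
      next
        case 2
        have "u (x + y) \<le> q1 (x + y)" using low that by auto
        also have "\<dots> \<le> q1 x + q1 y" using C(2) that sublin_add by blast
        finally show ?thesis using 2[rule_format, of y] by linarith
      qed
    qed
    then have "u (x + y) - q2 y \<le> u x" if "q2 \<in> C" for q2
      using that by (intro ge) auto
    then have "u (x + y) - u x \<le> u y"
      by (intro ge) (auto simp: algebra_simps)
    then show "u (x + y) \<le> u x + u y" by simp
  next
    fix r :: real and x assume r: "r \<ge> 0"
    show "u (r *\<^sub>R x) = r * u x"
    proof (cases "r = 0")
      case True
      obtain q where q: "q \<in> C" using C(1) by auto
      have "u 0 = 0"
      proof (rule antisym)
        show "u 0 \<le> 0" using low[OF q, of 0] C(2)[OF q] sublin_zero[of q] by auto
        show "0 \<le> u 0" by (rule ge) (use C(2) sublin_zero in force)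
      qed
      then show ?thesis using True by simp
    next
      case False
      then have rp: "r > 0" using r by simp
      have "u (r *\<^sub>R x) / r \<le> u x"
      proof (rule ge)
        fix q assume q: "q \<in> C"
        have "u (r *\<^sub>R x) \<le> q (r *\<^sub>R x)" using low[OF q] .
        also have "\<dots> = r * q x" using C(2)[OF q] sublin_hom r by blast
        finally show "u (r *\<^sub>R x) / r \<le> q x" using rp by (simp add: field_simps)
      qed
      moreover have "r * u x \<le> u (r *\<^sub>R x)"
      proof (rule ge)
        fix q assume q: "q \<in> C"
        have "r * u x \<le> r * q x" using low[OF q] r by (simp add: mult_left_mono)
        also have "\<dots> = q (r *\<^sub>R x)" using C(2)[OF q] sublin_hom r by metis
        finally show "r * u x \<le> q (r *\<^sub>R x)" .
      qed
      ultimately show ?thesis using rp by (simp add: field_simps)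
    qed
  qed
qed

lemma HB_functional:
  fixes w :: "'e::real_normed_vector"
  assumes w: "w \<noteq> 0"
  shows "\<exists>\<phi>. linear \<phi> \<and> (\<forall>z. \<bar>\<phi> z\<bar> \<le> norm z) \<and> \<phi> w \<noteq> 0"
proof -
  define S where "S = {q :: 'e \<Rightarrow> real. sublin q \<and> (\<forall>x. q x \<le> norm x) \<and> q (-w) \<le> - norm w}"
  define P where "P = (\<lambda>p q :: 'e \<Rightarrow> real. \<forall>x. q x \<le> p x)"
  define q0 where "q0 = Tq norm w"
  have q0S: "q0 \<in> S"
  proof -
    have "q0 (-w) \<le> norm (-w + 1 *\<^sub>R w) - 1 * norm w"
      unfolding q0_def by (rule Tq_le[OF sublin_norm]) simp
    then show ?thesis unfolding S_def q0_def using Tq_sublin[OF sublin_norm] Tq_below[OF sublin_norm]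
      by (auto simp: q0_def)
  qed
  have po: "partial_order_on S (relation_of P S)"
    unfolding partial_order_on_def preorder_on_def refl_on_def trans_def antisym_def relation_of_def P_def
    by (auto intro: order_trans antisym simp: fun_eq_iff)
  have "\<exists>m \<in> S. \<forall>a \<in> S. P m a \<longrightarrow> a = m"
  proof (rule predicate_Zorn[OF po])
    fix C assume C: "C \<in> Chains (relation_of P S)"
    then have CS: "C \<subseteq> S" by (rule Chains_relation_of)
    show "\<exists>u \<in> S. \<forall>a \<in> C. P a u"
    proof (cases "C = {}")
      case True then show ?thesis using q0S by auto
    next
      case False
      define u where "u \<equiv> \<lambda>x. Inf ((\<lambda>q. q x) ` C)"
      have ch: "(\<forall>x. q x \<le> p x) \<or> (\<forall>x. p x \<le> q x)" if "p \<in> C" "q \<in> C" for p q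
        using C that unfolding Chains_def relation_of_def P_def by blast
      have C2: "sublin q \<and> (\<forall>x. q x \<le> norm x)" if "q \<in> C" for q using CS that S_def by auto
      have uu1: "sublin u" unfolding u_def by (rule chain_inf_sublin(1)[of C]) (use False C2 ch in auto)
      have uu2: "u x \<le> q x" if "q \<in> C" for q x unfolding u_def
        by (rule chain_inf_sublin(2)[of C]) (use False C2 ch that in auto)
      note uu = uu1 uu2
      obtain q where q: "q \<in> C" using False by auto
      have "u \<in> S" unfolding S_def
        using uu(1) uu(2)[OF q] CS q C2[OF q] unfolding S_def
        by (auto intro: order_trans)
      moreover have "\<forall>a \<in> C. P a u" unfolding P_def using uu(2) by auto
      ultimately show ?thesis by blast
    qed
  qed
  then obtain m where mS: "m \<in> S" and mmin: "\<And>a. a \<in> S \<Longrightarrow> P m a \<Longrightarrow> a = m" by blast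
  have msub: "sublin m" using mS S_def by auto
  have add: "m (x + a) = m x + m a" for x a
  proof -
    have "Tq m a \<in> S" using mS Tq_sublin[OF msub] Tq_below[OF msub, of a] unfolding S_def
      by (auto intro: order_trans)
    moreover have "P m (Tq m a)" unfolding P_def using Tq_below[OF msub] by auto
    ultimately have eq: "Tq m a = m" using mmin by blast
    have "Tq m a x \<le> m (x + 1 *\<^sub>R a) - 1 * m a" by (rule Tq_le[OF msub]) simp
    then have "m x + m a \<le> m (x + a)" using eq by simp
    moreover have "m (x + a) \<le> m x + m a" using sublin_add[OF msub] .
    ultimately show ?thesis by simp
  qed
  have neg: "m (- x) = - m x" for x
    using add[of x "-x"] sublin_zero[OF msub] by simp
  have sc: "m (r *\<^sub>R x) = r * m x" for r x
  proof (cases "r \<ge> 0")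
    case True then show ?thesis using sublin_hom[OF msub] by blast
  next
    case False
    then have "m (r *\<^sub>R x) = m (- ((- r) *\<^sub>R x))" by simp
    also have "\<dots> = - ((- r) * m x)" using neg sublin_hom[OF msub, of "-r" x] False by simp
    finally show ?thesis by simp
  qed
  have lin: "linear m"
    by (rule linearI) (simp_all add: add sc)
  have bnd: "\<bar>m z\<bar> \<le> norm z" for z
  proof -
    have "m z \<le> norm z" "m (-z) \<le> norm (-z)" using mS unfolding S_def by blast+
    then show ?thesis using neg[of z] by simp
  qed
  have "m (-w) \<le> - norm w" using mS S_def by auto
  moreover have "norm w > 0" using w by simp
  ultimately have "m w \<noteq> 0" using neg[of w] by linarith
  then show ?thesis using lin bnd by blast
qed



lemma nsc: "norm (y /\<^sub>R (c::real)) = norm (y::'e::real_normed_vector) / \<bar>c\<bar>"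
  by (simp add: field_simps)

lemma geom_conv:
  fixes a :: "nat \<Rightarrow> 'e::banach"
  assumes A: "\<And>k. norm (a (Suc k) - a k) \<le> K * (1/2)^Suc k"
  shows "a \<longlonglongrightarrow> lim a" "norm (lim a - a 0) \<le> K"
proof -
  define b where "b k = a (Suc k) - a k" for k
  have g: "(\<lambda>k. K * (1/2::real)^Suc k) sums K" using sums_mult[OF power_half_series, of K] by simp
  have sb: "summable b"
    by (rule summable_comparison_test'[OF sums_summable[OF g], of 0]) (use A in \<open>simp add: b_def\<close>)
  have snb: "summable (\<lambda>k. norm (b k))"
    by (rule summable_comparison_test'[OF sums_summable[OF g], of 0]) (use A in \<open>simp add: b_def\<close>)
  have "(\<lambda>n. sum b {..<n}) \<longlonglongrightarrow> suminf b" using sb by (rule summable_LIMSEQ)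
  moreover have "sum b {..<n} = a n - a 0" for n unfolding b_def by (rule sum_lessThan_telescope)
  ultimately have "(\<lambda>n. a n - a 0) \<longlonglongrightarrow> suminf b" by simp
  then have "(\<lambda>n. a 0 + (a n - a 0)) \<longlonglongrightarrow> a 0 + suminf b" by (intro tendsto_add tendsto_const)
  then have conv: "a \<longlonglongrightarrow> a 0 + suminf b" by simp
  then have la: "lim a = a 0 + suminf b" by (rule limI)
  then show "a \<longlonglongrightarrow> lim a" using conv by simp
  have "norm (suminf b) \<le> (\<Sum>k. norm (b k))" by (rule summable_norm[OF snb])
  also have "\<dots> \<le> (\<Sum>k. K * (1/2::real)^Suc k)"
    by (rule suminf_le[OF _ snb sums_summable[OF g]]) (use A in \<open>simp add: b_def\<close>)
  also have "\<dots> = K" using g by (simp add: sums_iff)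
  finally show "norm (lim a - a 0) \<le> K" using la by simp
qed

definition Ahom :: "(int \<Rightarrow> 'e::real_normed_vector) \<Rightarrow> int \<Rightarrow> 'e" where
  "Ahom h n = lim (\<lambda>k. h (n * 2^k) /\<^sub>R 2^k)"

lemma hyers_int:
  fixes h :: "int \<Rightarrow> 'e::banach"
  assumes H: "\<And>m n. norm (h (m + n) - h m - h n) \<le> K"
  shows "(\<lambda>k. h (n * 2^k) /\<^sub>R 2^k) \<longlonglongrightarrow> Ahom h n" "norm (Ahom h n - h n) \<le> K"
proof -
  define a where "a k = h (n * 2^k) /\<^sub>R 2^k" for k
  have step: "norm (a (Suc k) - a k) \<le> K * (1/2)^Suc k" for k
  proof -
    define m where "m = n * 2^k"
    have e: "n * 2 ^ Suc k = m + m" by (simp add: m_def)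
    have 1: "a (Suc k) = h (m + m) /\<^sub>R 2 ^ Suc k" unfolding a_def e ..
    have 2: "a k = (2 *\<^sub>R h m) /\<^sub>R 2 ^ Suc k" unfolding a_def m_def[symmetric] by simp
    have "a (Suc k) - a k = (h (m + m) - h m - h m) /\<^sub>R 2 ^ Suc k"
      unfolding 1 2 scaleR_2 by (simp only: scaleR_diff_right diff_diff_eq)
    then have "norm (a (Suc k) - a k) = norm (h (m + m) - h m - h m) / 2 ^ Suc k" by (simp only: nsc power_abs abs_numeral)
    also have "\<dots> \<le> K / 2 ^ Suc k" by (intro divide_right_mono H) simp
    finally show ?thesis by (simp only: power_one_over times_divide_eq_right mult_1_right)
  qed
  note gc = geom_conv[of a, OF step]
  show "(\<lambda>k. h (n * 2^k) /\<^sub>R 2^k) \<longlonglongrightarrow> Ahom h n"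
    using gc(1) unfolding a_def Ahom_def .
  show "norm (Ahom h n - h n) \<le> K"
    using gc(2) unfolding a_def Ahom_def by simp
qed

lemma Ahom_add:
  fixes h :: "int \<Rightarrow> 'e::banach"
  assumes H: "\<And>m n. norm (h (m + n) - h m - h n) \<le> K"
  shows "Ahom h (m + n) = Ahom h m + Ahom h n"
proof -
  define s where "s k = h ((m + n) * 2^k) /\<^sub>R 2^k - h (m * 2^k) /\<^sub>R 2^k - h (n * 2^k) /\<^sub>R 2^k" for k
  have "s \<longlonglongrightarrow> Ahom h (m + n) - Ahom h m - Ahom h n"
    unfolding s_def by (intro tendsto_diff hyers_int(1)[OF H])
  moreover have "s \<longlonglongrightarrow> 0"
  proof (rule tendsto_0_le[where f = "\<lambda>k. (1/2::real)^k" and K = K])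
    show "(\<lambda>k. (1/2::real)^k) \<longlonglongrightarrow> 0" by (rule LIMSEQ_power_zero) simp
    show "\<forall>\<^sub>F k in sequentially. norm (s k) \<le> norm ((1/2::real)^k) * K"
    proof (rule always_eventually, rule allI)
      fix k
      have "s k = (h (m * 2^k + n * 2^k) - h (m * 2^k) - h (n * 2^k)) /\<^sub>R 2^k"
        unfolding s_def distrib_right by (simp only: scaleR_diff_right)
      then have "norm (s k) = norm (h (m * 2^k + n * 2^k) - h (m * 2^k) - h (n * 2^k)) / 2^k" by (simp only: nsc power_abs abs_numeral)
      also have "\<dots> \<le> K / 2^k" by (intro divide_right_mono H) simp
      finally show "norm (s k) \<le> norm ((1/2::real)^k) * K" by (simp add: power_one_over)
    qed
  qed
  ultimately have "Ahom h (m + n) - Ahom h m - Ahom h n = 0" by (rule LIMSEQ_unique)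
  then show ?thesis by (simp only: diff_diff_eq right_minus_eq)
qed

lemma Ahom_hom:
  fixes h :: "int \<Rightarrow> 'e::banach"
  assumes H: "\<And>m n. norm (h (m + n) - h m - h n) \<le> K"
  shows "Ahom h n = of_int n *\<^sub>R Ahom h 1"
  by (rule int_additive) (rule Ahom_add[OF H])



lemma J0_sub_PJ: "(J0 :: ('g::group_add \<Rightarrow> real) set) \<subseteq> PJ"
proof
  fix f :: "'g \<Rightarrow> real" assume "f \<in> J0"
  then have J: "\<And>x y. f (x + y) + f (x - y) = 2 * f x" and f0: "f 0 = 0" by (auto simp: J0_def)
  have J': "\<And>x y. f (x + y) + f (x - y) = 2 *\<^sub>R f x" using J by simp
  have "f (gpow x n) = of_int n * f x" for x n using jensen_gpow[of f, OF J' f0] by simp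
  moreover have "\<exists>c>0. \<forall>x y. \<bar>f (x + y) + f (x - y) - 2 * f x\<bar> \<le> c"
    by (rule exI[of _ 1]) (simp add: J)
  ultimately show "f \<in> PJ" by (auto simp: PJ_def)
qed

lemma stable_PJ:
  fixes v :: "'e::banach"
  assumes st: "jensen_stable TYPE('g::group_add) TYPE('e)" and v: "v \<noteq> 0"
  shows "(PJ :: ('g \<Rightarrow> real) set) \<subseteq> J0"
proof
  fix f :: "'g \<Rightarrow> real" assume "f \<in> PJ"
  then obtain c where c: "c > 0" "\<And>x y. \<bar>f (x + y) + f (x - y) - 2 * f x\<bar> \<le> c"
    and hom: "\<And>x n. f (gpow x n) = of_int n * f x" by (auto simp: PJ_def)
  have f0: "f 0 = 0" using hom[of 0 0] by simp
  define F where "F x = f x *\<^sub>R v" for x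
  have "\<exists>c>0. \<forall>x y. norm (F (x + y) + F (x - y) - 2 *\<^sub>R F x) \<le> c"
  proof (intro exI conjI allI)
    show "c * norm v > 0" using c v by simp
    fix x y
    have "F (x + y) + F (x - y) - 2 *\<^sub>R F x = (f (x + y) + f (x - y) - 2 * f x) *\<^sub>R v"
      unfolding F_def by (simp add: scaleR_left_distrib scaleR_diff_left)
    then show "norm (F (x + y) + F (x - y) - 2 *\<^sub>R F x) \<le> c * norm v"
      using c(2)[of x y] by (simp add: mult_right_mono)
  qed
  then obtain j B where J: "\<And>x y. j (x + y) + j (x - y) = 2 *\<^sub>R j x"
    and B: "\<And>x. norm (j x - F x) \<le> B"
    using st unfolding jensen_stable_def by blast
  define h where "h x = j x - j 0" for x
  have Jh: "h (x + y) + h (x - y) = 2 *\<^sub>R h x" for x y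
    using J[of x y] unfolding h_def by (simp add: algebra_simps scaleR_2)
  have h0: "h 0 = 0" by (simp add: h_def)
  have hh: "h (gpow x n) = of_int n *\<^sub>R h x" for x n by (rule jensen_gpow[OF Jh h0])
  have j0: "norm (j 0) \<le> B" using B[of 0] by (simp add: F_def f0)
  have hF: "h x = F x" for x
  proof (rule ccontr)
    assume ne: "h x \<noteq> F x"
    define e where "e = h x - F x"
    have ep: "norm e > 0" using ne by (simp add: e_def)
    have bnd: "real n * norm e \<le> 2 * B" for n :: nat
    proof -
      have "of_nat n *\<^sub>R e = h (gpow x (int n)) - F (gpow x (int n))"
        unfolding e_def hh F_def hom by (simp add: scaleR_diff_right F_def)
      also have "\<dots> = (j (gpow x (int n)) - F (gpow x (int n))) - j 0" by (simp add: h_def)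
      finally have "real n * norm e = norm ((j (gpow x (int n)) - F (gpow x (int n))) - j 0)"
        by (metis norm_scaleR abs_of_nat)
      also have "\<dots> \<le> norm (j (gpow x (int n)) - F (gpow x (int n))) + norm (j 0)"
        by (rule norm_triangle_ineq4)
      also have "\<dots> \<le> 2 * B" using B[of "gpow x (int n)"] j0 by simp
      finally show ?thesis .
    qed
    obtain n :: nat where n: "2 * B / norm e < real n" using reals_Archimedean2 by blast
    then have "2 * B < real n * norm e" using ep by (simp add: field_simps)
    then show False using bnd[of n] by simp
  qed
  have "f (x + y) + f (x - y) = 2 * f x" for x y
  proof -
    have "(f (x + y) + f (x - y)) *\<^sub>R v = (2 * f x) *\<^sub>R v"
      using Jh[of x y] unfolding hF F_def by (simp add: scaleR_left_distrib)
    then show ?thesis using v by simp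
  qed
  then show "f \<in> J0" using f0 by (simp add: J0_def)
qed

lemma tri4: "norm (a + b + d - e) \<le> norm a + norm b + norm d + norm (e::'e::real_normed_vector)"
proof -
  have "norm (a + b + d - e) \<le> norm (a + b + d) + norm e" by (rule norm_triangle_ineq4)
  moreover have "norm (a + b + d) \<le> norm (a + b) + norm d" by (rule norm_triangle_ineq)
  moreover have "norm (a + b) \<le> norm a + norm b" by (rule norm_triangle_ineq)
  ultimately show ?thesis by linarith
qed

lemma PJ_stable:
  assumes sub: "(PJ :: ('g::group_add \<Rightarrow> real) set) \<subseteq> J0"
  shows "jensen_stable TYPE('g) TYPE('e::banach)"
  unfolding jensen_stable_def
proof (intro allI impI)
  fix F :: "'g \<Rightarrow> 'e"
  assume "\<exists>c>0. \<forall>x y. norm (F (x + y) + F (x - y) - 2 *\<^sub>R F x) \<le> c"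
  then obtain c where c: "c > 0" "\<And>x y. norm (F (x + y) + F (x - y) - 2 *\<^sub>R F x) \<le> c" by blast
  define f where "f x = F x - F 0" for x
  have f0: "f 0 = 0" by (simp add: f_def)
  have fd: "f (x + y) + f (x - y) - 2 *\<^sub>R f x = F (x + y) + F (x - y) - 2 *\<^sub>R F x" for x y
    unfolding f_def by (simp add: algebra_simps scaleR_2)
  define K where "K = 3 / 2 * c"
  define hx where "hx x = (\<lambda>n. f (gpow x n))" for x
  have Hx: "norm (hx x (m + n) - hx x m - hx x n) \<le> K" for x m n
    unfolding K_def
  proof (rule jensen_add_int)
    show "hx x 0 = 0" by (simp add: hx_def f0)
    fix m n
    have "hx x (m + n) + hx x (m - n) - 2 *\<^sub>R hx x m
        = f (gpow x m + gpow x n) + f (gpow x m - gpow x n) - 2 *\<^sub>R f (gpow x m)"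
      unfolding hx_def gpow_add gpow_diff ..
    then show "norm (hx x (m + n) + hx x (m - n) - 2 *\<^sub>R hx x m) \<le> c"
      using c(2) fd by metis
  qed
  define g where "g x = Ahom (hx x) 1" for x
  have gclose: "norm (g x - f x) \<le> K" for x
    using hyers_int(2)[OF Hx[of x], of 1] by (simp add: g_def hx_def)
  have ghom: "g (gpow x n) = of_int n *\<^sub>R g x" for x n
  proof -
    have "g (gpow x n) = Ahom (hx x) n"
      unfolding g_def Ahom_def hx_def gpow_mult by simp
    also have "\<dots> = of_int n *\<^sub>R g x" unfolding g_def by (rule Ahom_hom[OF Hx[of x]])
    finally show ?thesis .
  qed
  define D where "D x y = g (x + y) + g (x - y) - 2 *\<^sub>R g x" for x y
  have Dbnd: "norm (D x y) \<le> c + 4 * K" for x y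
  proof -
    have Deq: "D x y = (f (x + y) + f (x - y) - 2 *\<^sub>R f x) + (g (x + y) - f (x + y))
                  + (g (x - y) - f (x - y)) - 2 *\<^sub>R (g x - f x)"
      unfolding D_def by (simp add: algebra_simps)
    have "norm (D x y) \<le> norm (f (x + y) + f (x - y) - 2 *\<^sub>R f x) + norm (g (x + y) - f (x + y))
                  + norm (g (x - y) - f (x - y)) + norm (2 *\<^sub>R (g x - f x))"
      unfolding Deq by (rule tri4)
    also have "\<dots> \<le> c + K + K + 2 * K"
      using c(2)[of x y] fd[of x y] gclose[of "x + y"] gclose[of "x - y"] gclose[of x]
      by (intro add_mono) auto
    finally show ?thesis by simp
  qed
  have K0: "K \<ge> 0" using c by (simp add: K_def)
  have D0: "D x y = 0" for x y
  proof (rule ccontr)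
    assume "D x y \<noteq> 0"
    then obtain \<phi> :: "'e \<Rightarrow> real" where lin: "linear \<phi>" and pb: "\<And>z. \<bar>\<phi> z\<bar> \<le> norm z"
      and ne: "\<phi> (D x y) \<noteq> 0" using HB_functional by blast
    define r where "r z = \<phi> (g z)" for z
    have rD: "r (a + b) + r (a - b) - 2 * r a = \<phi> (D a b)" for a b
      unfolding r_def D_def using lin by (simp add: linear_add linear_diff linear_scale)
    have "r \<in> PJ"
      unfolding PJ_def
    proof (intro CollectI conjI exI allI)
      show "c + 4 * K > 0" using c K0 by simp
      fix a b
      show "\<bar>r (a + b) + r (a - b) - 2 * r a\<bar> \<le> c + 4 * K"
        unfolding rD using pb[of "D a b"] Dbnd[of a b] by linarith
    next
      fix a n
      show "r (gpow a n) = of_int n * r a"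
        unfolding r_def ghom using lin by (simp add: linear_scale)
    qed
    then have "r \<in> J0" using sub by blast
    then have "r (x + y) + r (x - y) - 2 * r x = 0" by (simp add: J0_def)
    then have "\<phi> (D x y) = 0" by (simp only: rD)
    with ne show False by contradiction
  qed
  define j where "j x = g x + F 0" for x
  show "\<exists>j :: 'g \<Rightarrow> 'e. (\<forall>x y. j (x + y) + j (x - y) = 2 *\<^sub>R j x) \<and> (\<exists>B. \<forall>x. norm (j x - F x) \<le> B)"
  proof (intro exI conjI allI)
    fix x y
    have "g (x + y) + g (x - y) = 2 *\<^sub>R g x" using D0[of x y] unfolding D_def by (simp only: right_minus_eq)
    then show "j (x + y) + j (x - y) = 2 *\<^sub>R j x" unfolding j_def by (simp add: algebra_simps scaleR_2)
  next
    fix x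
    have "j x - F x = g x - f x" unfolding j_def f_def by (simp add: algebra_simps)
    then show "norm (j x - F x) \<le> K" using gclose[of x] by (simp only:)
  qed
qed

theorem corollary3p3:
  assumes "\<exists>v :: 'e::banach. v \<noteq> 0"
  shows "jensen_stable TYPE('g::group_add) TYPE('e) \<longleftrightarrow> (PJ :: ('g \<Rightarrow> real) set) = J0"
proof
  assume st: "jensen_stable TYPE('g) TYPE('e)"
  obtain v :: 'e where v: "v \<noteq> 0" using assms by blast
  have "(PJ :: ('g \<Rightarrow> real) set) \<subseteq> J0" by (rule stable_PJ[OF st v])
  then show "(PJ :: ('g \<Rightarrow> real) set) = J0" using J0_sub_PJ by (rule equalityI)
next
  assume "(PJ :: ('g \<Rightarrow> real) set) = J0"
  then have "(PJ :: ('g \<Rightarrow> real) set) \<subseteq> J0" by (rule equalityD1)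
  then show "jensen_stable TYPE('g) TYPE('e)" by (rule PJ_stable)
qed

end
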